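(* Let $N=\{1,\dots,n\}$, let $\boldsymbol{x}=(x_1,\dots,x_n)\in[0,1]^n$ be a profile of agent locations, let $s\in[0,1]$ be a facility location, and let $k$ be a positive integer with $k\le n$. Then the subgame $\Gamma_{\boldsymbol{x}}(s,k)$ has a (pure-strategy) Nash equilibrium, and in every Nash equilibrium of $\Gamma_{\boldsymbol{x}}(s,k)$ each agent $i\in N$ attains utility $1-|s-x_i|$ if $i\in N_k^*(\boldsymbol{x},s)$, and attains utility $0$ otherwise.
   Context: Distances are $d(a,b)=|a-b|$. Given $\boldsymbol{x}$ and $s$, agents are ordered by a priority relation $\triangleright$: agent $i$ has higher priority than agent $j$ if $|s-x_i|<|s-x_j|$; ties between equidistant agents are broken by a fixed deterministic rule, so $\triangleright$ is a complete strict order. $N_k^*(\boldsymbol{x},s)$ denotes the set of the $k$ highest-priority agents under $\triangleright$ (the "$k$-closest" agents). The subgame $\Gamma_{\boldsymbol{x}}(s,k)$ is the complete-information game in which each agent $i$ simultaneously chooses an action $a_i\in\{\emptyset,s\}$ ($a_i=s$ means travelling to the facility). Let $T=\{i: a_i=s\}$. If $|T|\le k$, all agents in $T$ are served; if $|T|>k$, the $k$ highest-priority agents of $T$ (under $\triangleright$) are served. A served agent $i$ gets utility $1-|s-x_i|$; an agent with $a_i=s$ who is not served gets $-|s-x_i|$; an agent with $a_i=\emptyset$ gets $0$. *)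

theory Defs
  imports Main "HOL.Real"
begin

text \<open>Agents are N = {1..n}; locations x :: nat => real; facility s.
  The priority relation pr i j means "agent i has higher priority than agent j".\<close>

definition agents :: "nat \<Rightarrow> nat set" where
  "agents n = {1..n}"

definition priority_order :: "nat \<Rightarrow> (nat \<Rightarrow> real) \<Rightarrow> real \<Rightarrow> (nat \<Rightarrow> nat \<Rightarrow> bool) \<Rightarrow> bool" where
  "priority_order n x s pr \<longleftrightarrow>
     (\<forall>i\<in>agents n. \<not> pr i i) \<and>
     (\<forall>i\<in>agents n. \<forall>j\<in>agents n. \<forall>l\<in>agents n. pr i j \<longrightarrow> pr j l \<longrightarrow> pr i l) \<and>
     (\<forall>i\<in>agents n. \<forall>j\<in>agents n. i \<noteq> j \<longrightarrow> pr i j \<or> pr j i) \<and>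
     (\<forall>i\<in>agents n. \<forall>j\<in>agents n. \<bar>s - x i\<bar> < \<bar>s - x j\<bar> \<longrightarrow> pr i j)"

definition top_k :: "(nat \<Rightarrow> nat \<Rightarrow> bool) \<Rightarrow> nat \<Rightarrow> nat set \<Rightarrow> nat set" where
  "top_k pr k T = {i \<in> T. card {j \<in> T. pr j i} < k}"

definition k_closest :: "nat \<Rightarrow> (nat \<Rightarrow> nat \<Rightarrow> bool) \<Rightarrow> nat \<Rightarrow> nat set" where
  "k_closest n pr k = top_k pr k (agents n)"

text \<open>Action profiles: a i = True means agent i travels to the facility (a_i = s).\<close>
definition travellers :: "nat \<Rightarrow> (nat \<Rightarrow> bool) \<Rightarrow> nat set" where
  "travellers n a = {i \<in> agents n. a i}"

definition served :: "nat \<Rightarrow> (nat \<Rightarrow> nat \<Rightarrow> bool) \<Rightarrow> nat \<Rightarrow> (nat \<Rightarrow> bool) \<Rightarrow> nat set" where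
  "served n pr k a =
     (if card (travellers n a) \<le> k then travellers n a else top_k pr k (travellers n a))"

definition utility ::
  "nat \<Rightarrow> (nat \<Rightarrow> real) \<Rightarrow> real \<Rightarrow> nat \<Rightarrow> (nat \<Rightarrow> nat \<Rightarrow> bool) \<Rightarrow> (nat \<Rightarrow> bool) \<Rightarrow> nat \<Rightarrow> real" where
  "utility n x s k pr a i =
     (if a i then (if i \<in> served n pr k a then 1 - \<bar>s - x i\<bar> else - \<bar>s - x i\<bar>) else 0)"

definition nash_eq ::
  "nat \<Rightarrow> (nat \<Rightarrow> real) \<Rightarrow> real \<Rightarrow> nat \<Rightarrow> (nat \<Rightarrow> nat \<Rightarrow> bool) \<Rightarrow> (nat \<Rightarrow> bool) \<Rightarrow> bool" where
  "nash_eq n x s k pr a \<longleftrightarrow>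
     (\<forall>i\<in>agents n. \<forall>b. utility n x s k pr (a(i := b)) i \<le> utility n x s k pr a i)"

end

theory Submission
  imports Defs
begin

lemma po_props:
  assumes "priority_order n x s pr"
  shows "\<And>i. i\<in>agents n \<Longrightarrow> \<not> pr i i"
    and "\<And>i j l. i\<in>agents n \<Longrightarrow> j\<in>agents n \<Longrightarrow> l\<in>agents n \<Longrightarrow> pr i j \<Longrightarrow> pr j l \<Longrightarrow> pr i l"
    and "\<And>i j. i\<in>agents n \<Longrightarrow> j\<in>agents n \<Longrightarrow> i \<noteq> j \<Longrightarrow> pr i j \<or> pr j i"
    and "\<And>i j. i\<in>agents n \<Longrightarrow> j\<in>agents n \<Longrightarrow> \<bar>s - x i\<bar> < \<bar>s - x j\<bar> \<Longrightarrow> pr i j"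
  using assms unfolding priority_order_def by blast+

lemma fin_agents: "finite (agents n)" by (simp add: agents_def)

lemma pred_strict:
  assumes po: "priority_order n x s pr" and T: "T \<subseteq> agents n"
    and i: "i \<in> T" and j: "j \<in> T" and p: "pr i j"
  shows "card {l\<in>T. pr l i} < card {l\<in>T. pr l j}"
proof (rule psubset_card_mono)
  have "finite T" using T fin_agents finite_subset by blast
  then show "finite {l\<in>T. pr l j}" by simp
  have sub: "{l\<in>T. pr l i} \<subseteq> {l\<in>T. pr l j}"
    using po_props(2)[OF po] T i j p by blast
  have "i \<in> {l\<in>T. pr l j}" using i p by simp
  moreover have "i \<notin> {l\<in>T. pr l i}" using po_props(1)[OF po] T i by blast
  ultimately show "{l\<in>T. pr l i} \<subset> {l\<in>T. pr l j}" using sub by blast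
qed

lemma above_outside:
  assumes po: "priority_order n x s pr" and T: "T \<subseteq> agents n"
    and j: "j \<in> top_k pr k T" and i: "i \<in> T" and ni: "i \<notin> top_k pr k T"
  shows "pr j i"
proof (rule ccontr)
  assume np: "\<not> pr j i"
  have jT: "j \<in> T" using j unfolding top_k_def by simp
  have "i \<noteq> j" using j ni by blast
  then have "pr i j" using po_props(3)[OF po] T i jT np by blast
  then have "card {l\<in>T. pr l i} < card {l\<in>T. pr l j}" using pred_strict[OF po T i jT] by simp
  then have "i \<in> top_k pr k T" using j i unfolding top_k_def by simp
  then show False using ni by simp
qed

lemma card_top_k:
  assumes po: "priority_order n x s pr" and T: "T \<subseteq> agents n"
  shows "card (top_k pr k T) = min k (card T)"
proof -
  define f where "f i = card {l\<in>T. pr l i}" for i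
  have finT: "finite T" using T fin_agents finite_subset by blast
  have inj: "inj_on f T"
  proof (rule inj_onI)
    fix i j assume i: "i \<in> T" and j: "j \<in> T" and e: "f i = f j"
    show "i = j"
    proof (rule ccontr)
      assume "i \<noteq> j"
      then have "pr i j \<or> pr j i" using po_props(3)[OF po] T i j by blast
      then show False
      proof
        assume "pr i j"
        then have "f i < f j" unfolding f_def using pred_strict[OF po T i j] by blast
        then show False using e by simp
      next
        assume "pr j i"
        then have "f j < f i" unfolding f_def using pred_strict[OF po T j i] by blast
        then show False using e by simp
      qed
    qed
  qed
  have rng: "f ` T \<subseteq> {..<card T}"
  proof
    fix m assume "m \<in> f ` T"
    then obtain i where i: "i \<in> T" and m: "m = f i" by blast
    have "{l\<in>T. pr l i} \<subseteq> T - {i}" using po_props(1)[OF po] T i by blast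
    then have "f i \<le> card (T - {i})" unfolding f_def using finT
      by (simp add: card_mono)
    also have "\<dots> < card T" by (rule card_Diff1_less[OF finT i])
    finally show "m \<in> {..<card T}" using m by simp
  qed
  have img: "f ` T = {..<card T}"
    using card_subset_eq[OF _ rng] card_image[OF inj] by simp
  have tk: "top_k pr k T = {i\<in>T. f i < k}" unfolding top_k_def f_def by simp
  have sub: "top_k pr k T \<subseteq> T" unfolding tk by blast
  have im1: "f ` top_k pr k T = {m \<in> f ` T. m < k}" unfolding tk by blast
  have im2: "{m \<in> f ` T. m < k} = {..<min k (card T)}" unfolding img by auto
  have inj2: "inj_on f (top_k pr k T)" using inj_on_subset[OF inj sub] .
  have "card (top_k pr k T) = card (f ` top_k pr k T)" using card_image[OF inj2] by simp
  also have "\<dots> = min k (card T)" unfolding im1 im2 by simp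
  finally show ?thesis .
qed

lemma closest_served:
  assumes po: "priority_order n x s pr" and iK: "i \<in> k_closest n pr k" and ai: "a i"
  shows "i \<in> served n pr k a"
proof -
  have iA: "i \<in> agents n" using iK unfolding k_closest_def top_k_def by simp
  have iT: "i \<in> travellers n a" using iA ai unfolding travellers_def by simp
  have TA: "travellers n a \<subseteq> agents n" unfolding travellers_def by auto
  have "card {l \<in> travellers n a. pr l i} \<le> card {l\<in>agents n. pr l i}"
    using TA fin_agents by (intro card_mono) auto
  also have "\<dots> < k" using iK unfolding k_closest_def top_k_def by simp
  finally have "i \<in> top_k pr k (travellers n a)" using iT unfolding top_k_def by simp
  then show ?thesis using iT unfolding served_def by simp
qed

theorem proposition3p1:
  fixes n k :: nat and x :: "nat \<Rightarrow> real" and s :: real and pr :: "nat \<Rightarrow> nat \<Rightarrow> bool"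
  assumes "1 \<le> k" and "k \<le> n"
    and "\<forall>i\<in>agents n. 0 \<le> x i \<and> x i \<le> 1"
    and "0 \<le> s" and "s \<le> 1"
    and "priority_order n x s pr"
  shows "(\<exists>a. nash_eq n x s k pr a) \<and>
         (\<forall>a. nash_eq n x s k pr a \<longrightarrow>
            (\<forall>i\<in>agents n. utility n x s k pr a i =
               (if i \<in> k_closest n pr k then 1 - \<bar>s - x i\<bar> else 0)))"
proof -
  note po = assms(6)
  let ?K = "k_closest n pr k"
  have dle: "\<bar>s - x i\<bar> \<le> 1" if "i \<in> agents n" for i
    using assms(3-5) that by auto
  have KA: "?K \<subseteq> agents n" unfolding k_closest_def top_k_def by auto
  have cardA: "card (agents n) = n" unfolding agents_def by simp
  have cardK: "card ?K = k" using card_top_k[OF po, of "agents n" k] cardA assms(2)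
    unfolding k_closest_def by simp
  have Kabove: "pr j i" if "j \<in> ?K" "i \<in> agents n" "i \<notin> ?K" for i j
    using above_outside[OF po, of "agents n" j k i] that unfolding k_closest_def by simp
  have part1: "\<exists>a. nash_eq n x s k pr a"
  proof
    define a where "a = (\<lambda>i. i \<in> ?K)"
    have Ta: "travellers n a = ?K" unfolding travellers_def a_def using KA by auto
    have Sa: "served n pr k a = ?K" unfolding served_def Ta using cardK by simp
    show "nash_eq n x s k pr a" unfolding nash_eq_def
    proof (intro ballI allI)
      fix i b assume iA: "i \<in> agents n"
      show "utility n x s k pr (a(i := b)) i \<le> utility n x s k pr a i"
      proof (cases "i \<in> ?K")
        case True
        then show ?thesis using dle[OF iA] Sa unfolding utility_def a_def by auto
      next
        case False
        show ?thesis
        proof (cases b)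
          case False
          then show ?thesis using \<open>i \<notin> ?K\<close> unfolding utility_def a_def by simp
        next
          case True
          have T2: "travellers n (a(i := b)) = insert i ?K"
            unfolding travellers_def a_def using KA iA True by auto
          have c2: "card (insert i ?K) = Suc k" using \<open>i \<notin> ?K\<close> cardK KA fin_agents
            by (simp add: finite_subset)
          have "?K \<subseteq> {j \<in> insert i ?K. pr j i}" using Kabove[OF _ iA \<open>i \<notin> ?K\<close>] by auto
          then have "k \<le> card {j \<in> insert i ?K. pr j i}"
            using card_mono[of "{j \<in> insert i ?K. pr j i}" ?K] cardK fin_agents KA
            by (simp add: finite_subset)
          then have "i \<notin> served n pr k (a(i := b))"
            unfolding served_def T2 top_k_def using c2 by simp
          then show ?thesis using \<open>i \<notin> ?K\<close> True unfolding utility_def a_def by simp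
        qed
      qed
    qed
  qed
  have part2: "utility n x s k pr a i = (if i \<in> ?K then 1 - \<bar>s - x i\<bar> else 0)"
    if ne: "nash_eq n x s k pr a" and iA: "i \<in> agents n" for a i
  proof -
    have dev: "utility n x s k pr (a(i := b)) i \<le> utility n x s k pr a i"
      if "i \<in> agents n" for b i using ne that unfolding nash_eq_def by simp
    have inK: "utility n x s k pr a j = 1 - \<bar>s - x j\<bar> \<and> (\<not> a j \<longrightarrow> \<bar>s - x j\<bar> = 1)"
      if jK: "j \<in> ?K" for j
    proof -
      have jA: "j \<in> agents n" using jK KA by auto
      have "j \<in> served n pr k (a(j := True))"
        using closest_served[OF po jK, of "a(j := True)"] by simp
      then have "utility n x s k pr (a(j := True)) j = 1 - \<bar>s - x j\<bar>"
        unfolding utility_def by simp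
      then have ge: "1 - \<bar>s - x j\<bar> \<le> utility n x s k pr a j" using dev[OF jA, of True] by simp
      show ?thesis
      proof (cases "a j")
        case True
        then show ?thesis using closest_served[OF po jK, of a] unfolding utility_def by simp
      next
        case False
        then have "utility n x s k pr a j = 0" unfolding utility_def by simp
        then show ?thesis using ge dle[OF jA] False by simp
      qed
    qed
    show ?thesis
    proof (cases "i \<in> ?K")
      case True
      then show ?thesis using inK by simp
    next
      case False
      note iK = False
      show ?thesis
      proof (cases "a i")
        case False
        then show ?thesis using iK unfolding utility_def by simp
      next
        case True
        note ai = True
        show ?thesis
        proof (cases "i \<in> served n pr k a")
          case False
          have "utility n x s k pr (a(i := False)) i = 0" unfolding utility_def by simp
          then have "0 \<le> - \<bar>s - x i\<bar>" using dev[OF iA, of False] False ai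
            unfolding utility_def by simp
          then show ?thesis using iK ai False unfolding utility_def by simp
        next
          case True
          note iS = True
          let ?T = "travellers n a"
          have TA: "?T \<subseteq> agents n" unfolding travellers_def by auto
          have iT: "i \<in> ?T" using iA ai unfolding travellers_def by simp
          have finT: "finite ?T" using TA fin_agents finite_subset by blast
          have "\<exists>j\<in>?K. \<not> a j"
          proof (rule ccontr)
            assume "\<not> (\<exists>j\<in>?K. \<not> a j)"
            then have KT: "?K \<subseteq> ?T" using KA unfolding travellers_def by auto
            have Kp: "?K \<subseteq> {j \<in> ?T. pr j i}" using KT Kabove[OF _ iA iK] by auto
            then have kle: "k \<le> card {j \<in> ?T. pr j i}"
              using card_mono[of "{j \<in> ?T. pr j i}" ?K] cardK finT by simp
            show False
            proof (cases "card ?T \<le> k")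
              case True
              have "insert i ?K \<subseteq> ?T" using KT iT by auto
              then have "card (insert i ?K) \<le> card ?T" using finT by (simp add: card_mono)
              moreover have "card (insert i ?K) = Suc k" using iK cardK KA fin_agents
                by (simp add: finite_subset)
              ultimately show False using True by simp
            next
              case False
              then have "i \<in> top_k pr k ?T" using iS unfolding served_def by simp
              then show False using kle unfolding top_k_def by simp
            qed
          qed
          then obtain j where jK: "j \<in> ?K" and nj: "\<not> a j" by blast
          have dj: "\<bar>s - x j\<bar> = 1" using inK[OF jK] nj by simp
          have jA: "j \<in> agents n" using jK KA by auto
          have pji: "pr j i" using Kabove[OF jK iA iK] .
          have "\<not> pr i j"
          proof
            assume "pr i j"
            then have "pr j j" using po_props(2)[OF po jA iA jA] pji by blast
            then show False using po_props(1)[OF po jA] by simp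
          qed
          then have "\<not> \<bar>s - x i\<bar> < \<bar>s - x j\<bar>" using po_props(4)[OF po iA jA] by blast
          then have "\<bar>s - x i\<bar> = 1" using dj dle[OF iA] by simp
          then show ?thesis using iK ai iS unfolding utility_def by simp
        qed
      qed
    qed
  qed
  show ?thesis using part1 part2 by blast
qed

end
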